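(* Let $c_r>0$ and $c_e>0$ be constants and let $\mu$ be a finite (nonnegative) measure on $\mathbb{R}$, where for a set $S$ of attribute values $\mu(S)$ is the (estimated) number of tuples whose value of a fixed indexed attribute $a$ lies in $S$. Consider two range conditions (candidate guards) on $a$, namely $o_x: a\in[v^x_1,v^x_2]$ and $o_y: a\in[v^y_1,v^y_2]$, coming from two different policies $P_x$ and $P_y$. Let $o_{x\oplus y}: a\in[\min(v^x_1,v^y_1),\max(v^x_2,v^y_2)]$ be their merge. Define the costs $\mathrm{cost}(P_x)=\mu([v^x_1,v^x_2])\,(c_r+c_e)$, $\mathrm{cost}(P_y)=\mu([v^y_1,v^y_2])\,(c_r+c_e)$, and $\mathrm{cost}(P_x\oplus P_y)=\mu([\min(v^x_1,v^y_1),\max(v^x_2,v^y_2)])\,(c_r+2c_e)$, and say that merging $o_x$ and $o_y$ is beneficial if $\mathrm{cost}(P_x\oplus P_y)<\mathrm{cost}(P_x)+\mathrm{cost}(P_y)$. If $[v^x_1,v^x_2]\cap[v^y_1,v^y_2]=\emptyset$, then merging $o_x$ and $o_y$ is not beneficial.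
   Context: Setting: access-control policies over a database relation are evaluated via guarded expressions. A guarded expression consists of a guard (a simple condition on an indexed attribute) together with a set (partition) of policies; its cost is modeled as $\mathrm{Card}(\text{guard})\cdot(c_r + |\text{partition}|\cdot c_e)$, where $\mathrm{Card}$ is the estimated number of tuples satisfying the guard, $c_r$ is the cost of reading one tuple and $c_e$ the cost of evaluating one policy's conditions on one tuple. A guarded expression containing a single policy $P_l$ with guard $o$ thus costs $\mathrm{Card}(o)(c_r+c_e)$, and a merged guard covering two policies costs $\mathrm{Card}(\text{merged guard})(c_r+2c_e)$. Here $\mathrm{Card}$ is modeled by the measure $\mu$. *)

theory Defs
  imports "HOL-Probability.Probability"
begin

definition single_cost :: "real measure \<Rightarrow> real \<Rightarrow> real \<Rightarrow> real \<Rightarrow> real \<Rightarrow> real" where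
  "single_cost \<mu> c_r c_e v1 v2 = measure \<mu> {v1..v2} * (c_r + c_e)"

definition merged_cost :: "real measure \<Rightarrow> real \<Rightarrow> real \<Rightarrow> real \<Rightarrow> real \<Rightarrow> real \<Rightarrow> real \<Rightarrow> real" where
  "merged_cost \<mu> c_r c_e vx1 vx2 vy1 vy2 =
     measure \<mu> {min vx1 vy1 .. max vx2 vy2} * (c_r + 2 * c_e)"

definition merge_beneficial :: "real measure \<Rightarrow> real \<Rightarrow> real \<Rightarrow> real \<Rightarrow> real \<Rightarrow> real \<Rightarrow> real \<Rightarrow> bool" where
  "merge_beneficial \<mu> c_r c_e vx1 vx2 vy1 vy2 \<longleftrightarrow>
     merged_cost \<mu> c_r c_e vx1 vx2 vy1 vy2
       < single_cost \<mu> c_r c_e vx1 vx2 + single_cost \<mu> c_r c_e vy1 vy2"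

end

theory Submission
  imports Defs
begin

theorem theorem1:
  fixes \<mu> :: "real measure" and c_r c_e vx1 vx2 vy1 vy2 :: real
  assumes "c_r > 0" and "c_e > 0"
    and "finite_measure \<mu>" and "sets \<mu> = sets borel"
    and "{vx1..vx2} \<inter> {vy1..vy2} = {}"
  shows "\<not> merge_beneficial \<mu> c_r c_e vx1 vx2 vy1 vy2"
proof -
  interpret finite_measure \<mu> by fact
  let ?A = "{vx1..vx2}" and ?B = "{vy1..vy2}" and ?M = "{min vx1 vy1 .. max vx2 vy2}"
  have sA: "?A \<in> sets \<mu>" and sB: "?B \<in> sets \<mu>" and sM: "?M \<in> sets \<mu>"
    using assms(4) by auto
  have sub: "?A \<union> ?B \<subseteq> ?M" by auto
  have "measure \<mu> (?A \<union> ?B) = measure \<mu> ?A + measure \<mu> ?B"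
    using finite_measure_Union[OF sA sB assms(5)] .
  moreover have "measure \<mu> (?A \<union> ?B) \<le> measure \<mu> ?M"
    using finite_measure_mono[OF sub sM] .
  ultimately have le: "measure \<mu> ?A + measure \<mu> ?B \<le> measure \<mu> ?M" by simp
  have nn: "0 \<le> measure \<mu> ?M" by simp
  have "(measure \<mu> ?A + measure \<mu> ?B) * (c_r + c_e) \<le> measure \<mu> ?M * (c_r + c_e)"
    using le assms(1,2) by (intro mult_right_mono) auto
  also have "\<dots> \<le> measure \<mu> ?M * (c_r + 2 * c_e)"
    using nn assms(2) by (intro mult_left_mono) auto
  finally show ?thesis
    unfolding merge_beneficial_def merged_cost_def single_cost_def
    by (simp add: algebra_simps)
qed

end
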